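(* Let $k$ be an algebraically closed field of characteristic zero, $f\in k[[\mathbf x]][z]$, $\mathbf x=(x_1,\dots,x_d)$, and let $\Gamma$ be a compact $1$-dimensional face of the Newton diagram of $f$ which does not meet the hyperplane $\{z=0\}$, with face polynomial $$f_\Gamma=a_\Gamma\,\mathbf x^{\mathbf n}z^{e}\prod_{j=1}^{r}(z^{p}-\mu_j\mathbf x^{\mathbf q})^{m_j},$$ where $e\ge1$, $\gcd(\mathbf q,p)=1$, $\mu_j\in k^*$ pairwise distinct, $a_\Gamma\in k^*$. Then the Newton diagram of $f_z=\partial f/\partial z$ has a face $\Gamma'$ parallel to $\Gamma$ with $$(f_z)_{\Gamma'}=a_\Gamma\mathbf x^{\mathbf n}z^{e-1}\Big(\prod_{j=1}^r(z^p-\mu_j\mathbf x^{\mathbf q})^{m_j-1}\Big)\Big(e\prod_{j=1}^r(z^p-\mu_j\mathbf x^{\mathbf q})+p\,z^{p}\sum_{i=1}^r m_i\prod_{j\neq i}(z^p-\mu_j\mathbf x^{\mathbf q})\Big).$$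
   Context: The Newton diagram of $h=\sum c_{\alpha,\beta}\mathbf x^\alpha z^\beta$ is the convex hull of $\operatorname{supp}(h)+\mathbb R^{d+1}_{\ge0}$; for a compact face $\gamma$, $h_\gamma$ is the sum of the terms of $h$ whose exponents lie on $\gamma$. *)

theory Defs
  imports "HOL-Analysis.Analysis" "HOL-Computational_Algebra.Polynomial"
begin

definition alg_closed_type :: "'a::field itself \<Rightarrow> bool" where
  "alg_closed_type _ \<longleftrightarrow> (\<forall>P :: 'a poly. degree P \<ge> 1 \<longrightarrow> (\<exists>x. poly P x = 0))"

text \<open>An element h of k[[x]][z] (x = (x_i), i ranging over the finite index type 'n) is
  represented by its coefficient function: h alpha beta is the coefficient of x^alpha z^beta.
  Membership in k[[x]][z] means: bounded z-degree.\<close>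
definition is_pspoly_z :: "(('n::finite \<Rightarrow> nat) \<Rightarrow> nat \<Rightarrow> 'a::zero) \<Rightarrow> bool" where
  "is_pspoly_z h \<longleftrightarrow> (\<exists>N. \<forall>\<alpha> \<beta>. N < \<beta> \<longrightarrow> h \<alpha> \<beta> = 0)"

definition dz :: "(('n::finite \<Rightarrow> nat) \<Rightarrow> nat \<Rightarrow> 'a::semiring_1) \<Rightarrow> ('n \<Rightarrow> nat) \<Rightarrow> nat \<Rightarrow> 'a" where
  "dz h \<alpha> \<beta> = of_nat (Suc \<beta>) * h \<alpha> (Suc \<beta>)"

text \<open>The exponent (alpha, beta) as a point of R^(d+1); coordinate None is the z-coordinate.\<close>
definition expt_pt :: "('n::finite \<Rightarrow> nat) \<Rightarrow> nat \<Rightarrow> real ^ ('n option)" where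
  "expt_pt \<alpha> \<beta> = (\<chi> i. case i of None \<Rightarrow> real \<beta> | Some j \<Rightarrow> real (\<alpha> j))"

definition supp_pts :: "(('n::finite \<Rightarrow> nat) \<Rightarrow> nat \<Rightarrow> 'a::zero) \<Rightarrow> (real ^ ('n option)) set" where
  "supp_pts h = {expt_pt \<alpha> \<beta> | \<alpha> \<beta>. h \<alpha> \<beta> \<noteq> 0}"

definition newton_diagram :: "(('n::finite \<Rightarrow> nat) \<Rightarrow> nat \<Rightarrow> 'a::zero) \<Rightarrow> (real ^ ('n option)) set" where
  "newton_diagram h = convex hull {u + v | u v. u \<in> supp_pts h \<and> (\<forall>i. 0 \<le> v $ i)}"

definition face_poly :: "(('n::finite \<Rightarrow> nat) \<Rightarrow> nat \<Rightarrow> 'a::zero) \<Rightarrow> (real ^ ('n option)) set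
    \<Rightarrow> ('n \<Rightarrow> nat) \<Rightarrow> nat \<Rightarrow> 'a" where
  "face_poly h \<gamma> \<alpha> \<beta> = (if expt_pt \<alpha> \<beta> \<in> \<gamma> then h \<alpha> \<beta> else 0)"

definition mono :: "('n::finite \<Rightarrow> 'a::comm_semiring_1) \<Rightarrow> ('n \<Rightarrow> nat) \<Rightarrow> 'a" where
  "mono x \<alpha> = (\<Prod>i\<in>UNIV. x i ^ \<alpha> i)"

definition peval :: "(('n::finite \<Rightarrow> nat) \<Rightarrow> nat \<Rightarrow> 'a::comm_semiring_1) \<Rightarrow> ('n \<Rightarrow> 'a) \<Rightarrow> 'a \<Rightarrow> 'a" where
  "peval c x z = (\<Sum>(\<alpha>, \<beta>) \<in> {(\<alpha>, \<beta>). c \<alpha> \<beta> \<noteq> 0}. c \<alpha> \<beta> * mono x \<alpha> * z ^ \<beta>)"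

definition finite_supp :: "(('n::finite \<Rightarrow> nat) \<Rightarrow> nat \<Rightarrow> 'a::zero) \<Rightarrow> bool" where
  "finite_supp c \<longleftrightarrow> finite {(\<alpha>, \<beta>). c \<alpha> \<beta> \<noteq> 0}"

end

theory Submission
  imports Defs
begin



lemma face_hull_aux:
  fixes W :: "'a::real_vector set"
  assumes F: "F face_of convex hull W" and fin: "finite K"
  shows "K \<subseteq> W \<Longrightarrow> x \<in> convex hull K \<Longrightarrow> x \<in> F \<Longrightarrow> x \<in> convex hull (K \<inter> F)"
  using fin
proof (induction K arbitrary: x)
  case empty then show ?case by simp
next
  case (insert a K)
  show ?case
  proof (cases "K = {}")
    case True
    then show ?thesis using insert.prems by (simp add: hull_inc)
  next
    case False
    from insert.prems(2) obtain u v b where uv: "u \<ge> 0" "v \<ge> 0" "u + v = 1" "b \<in> convex hull K"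
      "x = u *\<^sub>R a + v *\<^sub>R b"
      unfolding convex_hull_insert[OF False] by blast
    have KW: "K \<subseteq> W" using insert.prems(1) by simp
    have aW: "a \<in> convex hull W" using insert.prems(1) by (simp add: hull_inc)
    have bW: "b \<in> convex hull W" using uv(4) KW hull_mono by blast
    have sub: "convex hull (K \<inter> F) \<subseteq> convex hull (insert a K \<inter> F)" by (rule hull_mono) blast
    show ?thesis
    proof (cases "u = 0")
      case True
      then have "x = b" using uv by simp
      then have "b \<in> F" using insert.prems(3) by simp
      from insert.IH[OF KW uv(4) this] sub \<open>x = b\<close> show ?thesis by blast
    next
      case u0: False
      show ?thesis
      proof (cases "v = 0 \<or> a = b")
        case True
        then have "x = a" using uv
          by (metis add.commute add_0 scaleR_add_left scaleR_one scaleR_zero_left)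
        then show ?thesis using insert.prems(3) by (simp add: hull_inc)
      next
        case False
        have "u = 1 - v" using uv by simp
        then have "x = (1 - v) *\<^sub>R a + v *\<^sub>R b" using uv by simp
        moreover have "0 < v" "v < 1" using False uv u0 by auto
        ultimately have "x \<in> open_segment a b"
          using False unfolding in_segment by blast
        then have ab: "a \<in> F" "b \<in> F" using face_ofD[OF F _ aW bW] insert.prems(3) by auto
        have "b \<in> convex hull (insert a K \<inter> F)" using insert.IH[OF KW uv(4) ab(2)] sub by blast
        moreover have "a \<in> convex hull (insert a K \<inter> F)" using ab by (simp add: hull_inc)
        ultimately show ?thesis using uv convexD[OF convex_convex_hull] by metis
      qed
    qed
  qed
qed


lemma face_hull:
  fixes W :: "'a::real_vector set"
  assumes F: "F face_of convex hull W" and x: "x \<in> F"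
  shows "x \<in> convex hull (W \<inter> F)"
proof -
  have "x \<in> convex hull W" using x face_of_imp_subset[OF F] by auto
  then obtain K u where K: "finite K" "K \<subseteq> W" "\<forall>y\<in>K. 0 \<le> u y" "sum u K = 1" "(\<Sum>v\<in>K. u v *\<^sub>R v) = x"
    unfolding convex_hull_explicit by blast
  then have "x \<in> convex hull K" unfolding convex_hull_finite[OF K(1)] by blast
  from face_hull_aux[OF F K(1) K(2) this x] show ?thesis
    by (rule rev_subsetD[OF _ hull_mono]) (use K in blast)
qed

lemma expt_pt_Suc: "expt_pt \<alpha> (Suc \<beta>) = axis None 1 + expt_pt \<alpha> \<beta>"
  by (simp add: vec_eq_iff expt_pt_def axis_def split: option.split)

lemma geom:
  fixes f :: "('n::finite \<Rightarrow> nat) \<Rightarrow> nat \<Rightarrow> 'a::field_char_0"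
  assumes F: "G face_of newton_diagram f" and cG: "compact G" and nz: "\<forall>v\<in>G. v $ None \<noteq> 0"
  shows "G face_of (+) (axis None 1) ` newton_diagram (dz f)"
proof -
  define ez :: "real ^ ('n option)" where "ez = axis None 1"
  define W where "W = {u + v | u v. u \<in> supp_pts f \<and> (\<forall>i. 0 \<le> v $ i)}"
  define W' where "W' = {u + v | u v. u \<in> supp_pts (dz f) \<and> (\<forall>i. 0 \<le> v $ i)}"
  have ND: "newton_diagram f = convex hull W" by (simp add: newton_diagram_def W_def)
  have ND': "newton_diagram (dz f) = convex hull W'" by (simp add: newton_diagram_def W'_def)
  obtain B where B: "\<forall>y\<in>G. norm y \<le> B"
    using compact_imp_bounded[OF cG] unfolding bounded_iff by blast
  have step1: "x \<in> supp_pts f" if x: "x \<in> W \<inter> G" for x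
  proof -
    from x obtain u v where uv: "x = u + v" "u \<in> supp_pts f" "\<forall>i. 0 \<le> v $ i" unfolding W_def by blast
    show ?thesis
    proof (cases "v = 0")
      case True then show ?thesis using uv by simp
    next
      case False
      then have nv: "norm v > 0" by simp
      define t where "t = max 2 ((B + norm u + 1) / norm v)"
      have t1: "t > 1" by (simp add: t_def)
      have tv: "t * norm v \<ge> B + norm u + 1"
      proof -
        have "(B + norm u + 1) / norm v \<le> t" by (simp add: t_def)
        then show ?thesis using nv by (simp add: pos_divide_le_eq mult.commute)
      qed
      have "u \<in> W" unfolding W_def using uv(2) by (intro CollectI exI[of _ u] exI[of _ 0]) simp
      then have uN: "u \<in> newton_diagram f" unfolding ND by (simp add: hull_inc)
      have "u + t *\<^sub>R v \<in> W" unfolding W_def using uv(2,3) t1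
        by (intro CollectI exI[of _ u] exI[of _ "t *\<^sub>R v"]) simp
      then have tN: "u + t *\<^sub>R v \<in> newton_diagram f" unfolding ND by (simp add: hull_inc)
      have "x \<in> open_segment u (u + t *\<^sub>R v)"
        unfolding in_segment
      proof (intro conjI exI[of _ "1 / t"])
        show "u \<noteq> u + t *\<^sub>R v" using False t1 by simp
        show "x = (1 - 1 / t) *\<^sub>R u + (1 / t) *\<^sub>R (u + t *\<^sub>R v)"
          using t1 uv(1) by (simp add: algebra_simps)
      qed (use t1 in auto)
      then have "u + t *\<^sub>R v \<in> G" using face_ofD[OF F _ uN tN] x by blast
      then have "norm (u + t *\<^sub>R v) \<le> B" using B by blast
      moreover have "norm (u + t *\<^sub>R v) \<ge> t * norm v - norm u"
        using norm_triangle_ineq2[of "t *\<^sub>R v" "-u"] t1 by (simp add: add.commute)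
      ultimately show ?thesis using tv by linarith
    qed
  qed
  have step3: "supp_pts f \<inter> G \<subseteq> (+) ez ` supp_pts (dz f)"
  proof
    fix s assume s: "s \<in> supp_pts f \<inter> G"
    then obtain \<alpha> \<beta> where ab: "s = expt_pt \<alpha> \<beta>" "f \<alpha> \<beta> \<noteq> 0" unfolding supp_pts_def by blast
    have "s $ None \<noteq> 0" using nz s by blast
    then have "\<beta> \<noteq> 0" using ab by (simp add: expt_pt_def)
    then obtain b where b: "\<beta> = Suc b" using not0_implies_Suc by blast
    have "dz f \<alpha> b \<noteq> 0" using ab b by (simp add: dz_def del: of_nat_Suc)
    then have "expt_pt \<alpha> b \<in> supp_pts (dz f)" unfolding supp_pts_def by blast
    then show "s \<in> (+) ez ` supp_pts (dz f)" using ab b by (simp add: expt_pt_Suc ez_def)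
  qed
  have step4: "supp_pts (dz f) \<subseteq> W'"
  proof
    fix x assume "x \<in> supp_pts (dz f)"
    then show "x \<in> W'" unfolding W'_def by (intro CollectI exI[of _ x] exI[of _ 0]) simp
  qed
  have sub1: "G \<subseteq> (+) ez ` newton_diagram (dz f)"
  proof
    fix x assume x: "x \<in> G"
    have "x \<in> convex hull (W \<inter> G)" using face_hull[OF F[unfolded ND] x] .
    also have "\<dots> \<subseteq> convex hull ((+) ez ` W')"
      using step1 step3 step4 by (intro hull_mono) blast
    finally show "x \<in> (+) ez ` newton_diagram (dz f)"
      unfolding ND' convex_hull_translation .
  qed
  have sub2: "(+) ez ` newton_diagram (dz f) \<subseteq> newton_diagram f"
    unfolding ND' ND convex_hull_translation[symmetric]
  proof (rule hull_mono, rule subsetI)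
    fix y assume "y \<in> (+) ez ` W'"
    then obtain u v where uv: "y = ez + (u + v)" "u \<in> supp_pts (dz f)" "\<forall>i. 0 \<le> v $ i"
      unfolding W'_def by blast
    from uv(2) obtain \<alpha> \<beta> where ab: "u = expt_pt \<alpha> \<beta>" "dz f \<alpha> \<beta> \<noteq> 0" unfolding supp_pts_def by blast
    have "f \<alpha> (Suc \<beta>) \<noteq> 0" using ab(2) by (simp add: dz_def)
    then have "ez + u \<in> supp_pts f" using ab unfolding supp_pts_def by (force simp: expt_pt_Suc ez_def)
    then show "y \<in> W" unfolding W_def using uv
      by (intro CollectI exI[of _ "ez + u"] exI[of _ v]) (simp add: add.assoc)
  qed
  show ?thesis using face_of_subset[OF F sub1 sub2] by (simp add: ez_def)
qed



lemma pderiv_sum': "pderiv (\<Sum>k\<in>A. p k) = (\<Sum>k\<in>A. pderiv (p k))"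
  by (induct A rule: infinite_finite_induct) (simp_all add: pderiv_add)

definition PP :: "(('n::finite \<Rightarrow> nat) \<Rightarrow> nat \<Rightarrow> 'a::comm_semiring_1) \<Rightarrow> ('n \<Rightarrow> 'a) \<Rightarrow> 'a poly" where
  "PP c x = (\<Sum>pr\<in>{(\<alpha>, \<beta>). c \<alpha> \<beta> \<noteq> 0}. monom (c (fst pr) (snd pr) * mono x (fst pr)) (snd pr))"

lemma poly_PP: "poly (PP c x) z = peval c x z"
  unfolding PP_def peval_def poly_sum poly_monom by (simp add: case_prod_beta)

lemma poly_pderiv_PP:
  fixes c :: "('n::finite \<Rightarrow> nat) \<Rightarrow> nat \<Rightarrow> 'a::field_char_0"
  assumes fs: "finite_supp c"
  shows "poly (pderiv (PP c x)) z = peval (dz c) x z"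
proof -
  let ?A = "{(\<alpha>, \<beta>). c \<alpha> \<beta> \<noteq> 0}"
  let ?A1 = "{pr \<in> ?A. snd pr \<noteq> 0}"
  let ?A' = "{(\<alpha>, \<beta>). dz c \<alpha> \<beta> \<noteq> 0}"
  let ?T = "\<lambda>pr. of_nat (snd pr) * c (fst pr) (snd pr) * mono x (fst pr) * z ^ (snd pr - 1)"
  define g where "g = (\<lambda>pr::('n \<Rightarrow> nat) \<times> nat. (fst pr, Suc (snd pr)))"
  have fin: "finite ?A" using fs unfolding finite_supp_def by simp
  have "poly (pderiv (PP c x)) z = (\<Sum>pr\<in>?A. ?T pr)"
    unfolding PP_def pderiv_sum' poly_sum pderiv_monom poly_monom by (simp add: mult_ac)
  also have "\<dots> = (\<Sum>pr\<in>?A1. ?T pr)"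
    by (rule sum.mono_neutral_right[OF fin]) auto
  also have "?A1 = g ` ?A'"
  proof
    show "?A1 \<subseteq> g ` ?A'"
    proof
      fix pr assume "pr \<in> ?A1"
      then obtain \<alpha> \<beta> where pr: "pr = (\<alpha>, Suc \<beta>)" "c \<alpha> (Suc \<beta>) \<noteq> 0"
        by (cases pr; cases "snd pr") auto
      then have "(\<alpha>, \<beta>) \<in> ?A'" by (simp add: dz_def del: of_nat_Suc)
      then show "pr \<in> g ` ?A'" using pr by (auto simp: g_def image_iff)
    qed
  next
    show "g ` ?A' \<subseteq> ?A1" by (auto simp: g_def dz_def simp del: of_nat_Suc)
  qed
  also have "(\<Sum>pr\<in>g ` ?A'. ?T pr) = (\<Sum>pr\<in>?A'. ?T (g pr))"
    by (rule sum.reindex[unfolded comp_def]) (auto simp: g_def inj_on_def)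
  also have "\<dots> = peval (dz c) x z"
    unfolding peval_def by (rule sum.cong) (auto simp: g_def dz_def)
  finally show ?thesis .
qed





lemma deriv_Q:
  fixes c0 w :: "'a::field_char_0" and \<mu> :: "nat \<Rightarrow> 'a" and m :: "nat \<Rightarrow> nat" and e p r :: nat
  assumes e: "e \<ge> 1" and m: "\<forall>j\<in>{1..r}. m j \<ge> 1"
  defines "Q \<equiv> smult c0 (monom 1 e * (\<Prod>j\<in>{1..r}. (monom 1 p - [:\<mu> j * w:]) ^ m j))"
  shows "poly Q z = c0 * z ^ e * (\<Prod>j=1..r. (z ^ p - \<mu> j * w) ^ m j)"
    and "poly (pderiv Q) z = c0 * z ^ (e - 1) * (\<Prod>j=1..r. (z ^ p - \<mu> j * w) ^ (m j - 1))
               * (of_nat e * (\<Prod>j=1..r. (z ^ p - \<mu> j * w))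
                  + of_nat p * z ^ p * (\<Sum>i=1..r. of_nat (m i) *
                       (\<Prod>j\<in>{1..r} - {i}. (z ^ p - \<mu> j * w))))"
proof -
  define I where "I = {1..r}"
  define G where "G j = monom 1 p - [:\<mu> j * w:]" for j
  define g where "g j = z ^ p - \<mu> j * w" for j
  have pG: "poly (G j) z = g j" for j by (simp add: G_def g_def poly_monom)
  show "poly Q z = c0 * z ^ e * (\<Prod>j=1..r. (z ^ p - \<mu> j * w) ^ m j)"
    unfolding Q_def by (simp add: poly_prod poly_monom mult_ac)
  have dG: "pderiv (G j) = monom (of_nat p) (p - 1)" for j
    by (simp add: G_def pderiv_diff pderiv_monom)
  have fin: "finite I" by (simp add: I_def)
  have split: "(\<Prod>j\<in>J. g j ^ m j) = (\<Prod>j\<in>J. g j ^ (m j - 1)) * (\<Prod>j\<in>J. g j)" if "J \<subseteq> I" for J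
  proof -
    have "(\<Prod>j\<in>J. g j ^ m j) = (\<Prod>j\<in>J. g j ^ (m j - 1) * g j)"
    proof (rule prod.cong[OF refl])
      fix j assume "j \<in> J"
      then have "m j = Suc (m j - 1)" using m that I_def by fastforce
      then show "g j ^ m j = g j ^ (m j - 1) * g j" by (metis power_Suc2)
    qed
    then show ?thesis by (simp add: prod.distrib)
  qed
  have key: "(\<Prod>j\<in>I - {i}. g j ^ m j) * g i ^ (m i - 1) = (\<Prod>j\<in>I. g j ^ (m j - 1)) * (\<Prod>j\<in>I - {i}. g j)"
    if "i \<in> I" for i
  proof -
    have "(\<Prod>j\<in>I. g j ^ (m j - 1)) = g i ^ (m i - 1) * (\<Prod>j\<in>I - {i}. g j ^ (m j - 1))"
      using prod.remove[OF fin that] by simp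
    then show ?thesis using split[of "I - {i}"] by (simp add: mult_ac)
  qed
  have zz: "z ^ e * (of_nat p * z ^ (p - 1)) = z ^ (e - 1) * (of_nat p * z ^ p)"
  proof (cases "p = 0")
    case False
    then have "z ^ e * z ^ (p - 1) = z ^ (e - 1) * z ^ p"
      using e by (simp add: power_add[symmetric])
    then show ?thesis by (metis mult.left_commute)
  qed simp
  have ze: "z ^ e = z ^ (e - 1) * z" using e by (metis Suc_diff_le diff_Suc_1 power_Suc2)
  have "poly (pderiv Q) z = c0 * (z ^ e * (\<Sum>i\<in>I. (\<Prod>j\<in>I - {i}. g j ^ m j) *
            (of_nat (m i) * (g i ^ (m i - 1) * (of_nat p * z ^ (p - 1)))))
          + (\<Prod>j\<in>I. g j ^ m j) * (of_nat e * z ^ (e - 1)))"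
    unfolding Q_def pderiv_smult pderiv_mult pderiv_prod pderiv_power pderiv_monom
      G_def[symmetric] I_def[symmetric] dG
    by (simp add: poly_sum poly_prod pG poly_monom mult_ac)
  also have "(\<Sum>i\<in>I. (\<Prod>j\<in>I - {i}. g j ^ m j) *
            (of_nat (m i) * (g i ^ (m i - 1) * (of_nat p * z ^ (p - 1)))))
      = (\<Sum>i\<in>I. (\<Prod>j\<in>I. g j ^ (m j - 1)) * (of_nat (m i) * (\<Prod>j\<in>I - {i}. g j))) * (of_nat p * z ^ (p - 1))"
    unfolding sum_distrib_right
  proof (rule sum.cong[OF refl])
    fix i assume "i \<in> I"
    from key[OF this] show "(\<Prod>j\<in>I - {i}. g j ^ m j) * (of_nat (m i) * (g i ^ (m i - 1) * (of_nat p * z ^ (p - 1))))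
       = (\<Prod>j\<in>I. g j ^ (m j - 1)) * (of_nat (m i) * (\<Prod>j\<in>I - {i}. g j)) * (of_nat p * z ^ (p - 1))"
      by (metis (no_types, lifting) mult.assoc mult.left_commute)
  qed
  finally have "poly (pderiv Q) z = c0 * ((\<Sum>i\<in>I. (\<Prod>j\<in>I. g j ^ (m j - 1)) * (of_nat (m i) * (\<Prod>j\<in>I - {i}. g j)))
         * (z ^ e * (of_nat p * z ^ (p - 1))) + (\<Prod>j\<in>I. g j ^ m j) * (of_nat e * z ^ (e - 1)))"
    by (simp add: mult_ac)
  also have "\<dots> = c0 * z ^ (e - 1) * (\<Prod>j\<in>I. g j ^ (m j - 1)) *
      (of_nat e * (\<Prod>j\<in>I. g j) + of_nat p * z ^ p * (\<Sum>i\<in>I. of_nat (m i) * (\<Prod>j\<in>I - {i}. g j)))"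
    unfolding zz split[OF order_refl] sum_distrib_left[symmetric]
    by (simp add: algebra_simps)
  finally show "poly (pderiv Q) z = c0 * z ^ (e - 1) * (\<Prod>j=1..r. (z ^ p - \<mu> j * w) ^ (m j - 1))
               * (of_nat e * (\<Prod>j=1..r. (z ^ p - \<mu> j * w))
                  + of_nat p * z ^ p * (\<Sum>i=1..r. of_nat (m i) *
                       (\<Prod>j\<in>{1..r} - {i}. (z ^ p - \<mu> j * w))))"
    by (simp add: I_def g_def)
qed


theorem lemma4p10:
  fixes f :: "('n::finite \<Rightarrow> nat) \<Rightarrow> nat \<Rightarrow> 'a::field_char_0"
    and \<Gamma> :: "(real ^ ('n option)) set"
    and a :: 'a and n q :: "'n \<Rightarrow> nat" and e p r :: nat
    and \<mu> :: "nat \<Rightarrow> 'a" and m :: "nat \<Rightarrow> nat"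
  assumes "alg_closed_type TYPE('a)"
    and "is_pspoly_z f"
    and "\<Gamma> face_of newton_diagram f" and "compact \<Gamma>" and "aff_dim \<Gamma> = 1"
    and "\<forall>v\<in>\<Gamma>. v $ None \<noteq> 0"
    and "e \<ge> 1"
    and "\<forall>g::nat. g dvd p \<and> (\<forall>i. g dvd q i) \<longrightarrow> g = 1"
    and "\<forall>j\<in>{1..r}. \<mu> j \<noteq> 0"
    and "inj_on \<mu> {1..r}"
    and "\<forall>j\<in>{1..r}. m j \<ge> 1"
    and "a \<noteq> 0"
    and "finite_supp (face_poly f \<Gamma>)"
    and "\<forall>x z. peval (face_poly f \<Gamma>) x z =
           a * mono x n * z ^ e * (\<Prod>j=1..r. (z ^ p - \<mu> j * mono x q) ^ m j)"
  shows "\<exists>\<Gamma>'. \<Gamma>' face_of newton_diagram (dz f) \<and> compact \<Gamma>' \<and> aff_dim \<Gamma>' = 1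
          \<and> (\<exists>t. (\<lambda>v. v + t) ` (affine hull \<Gamma>) = affine hull \<Gamma>')
          \<and> finite_supp (face_poly (dz f) \<Gamma>')
          \<and> (\<forall>x z. peval (face_poly (dz f) \<Gamma>') x z =
               a * mono x n * z ^ (e - 1) * (\<Prod>j=1..r. (z ^ p - \<mu> j * mono x q) ^ (m j - 1))
               * (of_nat e * (\<Prod>j=1..r. (z ^ p - \<mu> j * mono x q))
                  + of_nat p * z ^ p * (\<Sum>i=1..r. of_nat (m i) *
                       (\<Prod>j\<in>{1..r} - {i}. (z ^ p - \<mu> j * mono x q)))))"
proof -
  define ez :: "real ^ ('n option)" where "ez = axis None 1"
  define G' where "G' = (+) (-ez) ` \<Gamma>"
  have gf: "\<Gamma> face_of (+) ez ` newton_diagram (dz f)"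
    using geom[OF assms(3,4,6)] by (simp add: ez_def)
  have F': "G' face_of newton_diagram (dz f)"
  proof -
    have "(+) (-ez) ` \<Gamma> face_of (+) (-ez) ` ((+) ez ` newton_diagram (dz f))"
      using gf by (simp only: face_of_translation_eq)
    then show ?thesis by (simp add: G'_def image_image)
  qed
  have cG': "compact G'" unfolding G'_def by (rule compact_translation[OF assms(4)])
  have aG': "aff_dim G' = 1" unfolding G'_def using assms(5) aff_dim_translation_eq[of "-ez" \<Gamma>] by (simp only:)
  have hG': "\<exists>t. (\<lambda>v. v + t) ` (affine hull \<Gamma>) = affine hull G'"
  proof (intro exI[of _ "-ez"])
    have "(\<lambda>v. v + -ez) = (+) (-ez)" by (simp add: fun_eq_iff add.commute)
    then show "(\<lambda>v. v + -ez) ` (affine hull \<Gamma>) = affine hull G'"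
      unfolding G'_def affine_hull_translation by simp
  qed
  have memG': "y \<in> G' \<longleftrightarrow> ez + y \<in> \<Gamma>" for y
  proof
    assume "y \<in> G'" then show "ez + y \<in> \<Gamma>" by (auto simp: G'_def)
  next
    assume "ez + y \<in> \<Gamma>"
    then show "y \<in> G'" unfolding G'_def by (rule rev_image_eqI) simp
  qed
  define c where "c = face_poly f \<Gamma>"
  have fp: "face_poly (dz f) G' = dz c"
    by (simp add: fun_eq_iff face_poly_def dz_def c_def memG' expt_pt_Suc ez_def)
  have fsc: "finite_supp c" using assms(13) by (simp add: c_def)
  have fsd: "finite_supp (dz c)"
  proof -
    define g where "g = (\<lambda>pr::('n \<Rightarrow> nat) \<times> nat. (fst pr, Suc (snd pr)))"
    have "g ` {(\<alpha>, \<beta>). dz c \<alpha> \<beta> \<noteq> 0} \<subseteq> {(\<alpha>, \<beta>). c \<alpha> \<beta> \<noteq> 0}"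
      by (auto simp: g_def dz_def)
    then have "finite (g ` {(\<alpha>, \<beta>). dz c \<alpha> \<beta> \<noteq> 0})"
      using fsc unfolding finite_supp_def by (rule finite_subset)
    moreover have "inj_on g {(\<alpha>, \<beta>). dz c \<alpha> \<beta> \<noteq> 0}" by (auto simp: g_def inj_on_def)
    ultimately show ?thesis unfolding finite_supp_def by (rule finite_imageD)
  qed
  have ident: "peval (dz c) x z =
               a * mono x n * z ^ (e - 1) * (\<Prod>j=1..r. (z ^ p - \<mu> j * mono x q) ^ (m j - 1))
               * (of_nat e * (\<Prod>j=1..r. (z ^ p - \<mu> j * mono x q))
                  + of_nat p * z ^ p * (\<Sum>i=1..r. of_nat (m i) *
                       (\<Prod>j\<in>{1..r} - {i}. (z ^ p - \<mu> j * mono x q))))" for x z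
  proof -
    define Q where "Q = smult (a * mono x n) (monom 1 e * (\<Prod>j\<in>{1..r}. (monom 1 p - [:\<mu> j * mono x q:]) ^ m j))"
    have "poly (PP c x) = poly Q"
    proof
      fix y
      show "poly (PP c x) y = poly Q y"
        unfolding poly_PP Q_def deriv_Q(1)[OF assms(7,11)] using assms(14) by (simp add: c_def)
    qed
    then have "PP c x = Q" by (simp add: poly_eq_poly_eq_iff)
    then have "peval (dz c) x z = poly (pderiv Q) z" using poly_pderiv_PP[OF fsc] by metis
    then show ?thesis unfolding Q_def deriv_Q(2)[OF assms(7,11)] .
  qed
  show ?thesis
    by (intro exI[of _ G'] conjI F' cG' aG' hG' allI) (simp_all add: fp fsd ident)
qed

end
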